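(* Let $1\le d<n$ be integers and $\alpha>0$. Suppose $K\in C(\mathbb{R}^n\setminus\{0\})\cap L^\infty(\mathbb{R}^n)$ is $(d,\alpha)$-distance-exact and radial, i.e. $K(x)=\tilde K(|x|)$ for some $\tilde K\in C(0,\infty)\cap L^\infty(0,\infty)$. Then $K$ is constant.
   Context: For a $d$-plane $E$ and $x\notin E$, $D_{K,\mathcal H^d|_E,\alpha}(x)=\left(\int_E K(x-y)|x-y|^{-d-\alpha}d\mathcal H^d(y)\right)^{-1/\alpha}$. $K$ is $(d,\alpha)$-distance-exact if for each $d$-dimensional plane $E$ there is a constant $c_E$ with $D_{K,\mathcal H^d|_E,\alpha}(x)=c_E\operatorname{dist}(x,E)$ for all $x\notin E$. *)

theory Defs
  imports "HOL-Analysis.Analysis"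
begin

text \<open>An orthonormal parametrisation of a d-plane E: E = a + span of the
  orthonormal vectors v 0, ..., v (d-1), parametrised by t in R^d
  (functions nat => real on the index set {..<d}).\<close>
definition plane_frame :: "nat \<Rightarrow> 'a::euclidean_space set \<Rightarrow> 'a \<Rightarrow> (nat \<Rightarrow> 'a) \<Rightarrow> bool" where
  "plane_frame d E a v \<longleftrightarrow>
     (\<forall>i<d. \<forall>j<d. v i \<bullet> v j = (if i = j then 1 else 0)) \<and>
     E = (\<lambda>t. a + (\<Sum>i<d. t i *\<^sub>R v i)) ` UNIV"

definition d_plane :: "nat \<Rightarrow> 'a::euclidean_space set \<Rightarrow> bool" where
  "d_plane d E \<longleftrightarrow> affine E \<and> aff_dim E = int d"

text \<open>Integral over a d-plane E with respect to H^d restricted to E: the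
  d-dimensional Hausdorff measure on E is the image of Lebesgue measure on R^d
  under any orthonormal (isometric) parametrisation of E.\<close>
definition plane_hausdorff_integral ::
    "nat \<Rightarrow> 'a::euclidean_space set \<Rightarrow> ('a \<Rightarrow> real) \<Rightarrow> real" where
  "plane_hausdorff_integral d E f =
     (SOME I. \<exists>a v. plane_frame d E a v \<and>
        I = (\<integral>t. f (a + (\<Sum>i<d. t i *\<^sub>R v i)) \<partial>(PiM {..<d} (\<lambda>_. lborel))))"

definition D_plane :: "('a::euclidean_space \<Rightarrow> real) \<Rightarrow> nat \<Rightarrow> real \<Rightarrow> 'a set \<Rightarrow> 'a \<Rightarrow> real" where
  "D_plane K d \<alpha> E x =
     (plane_hausdorff_integral d E (\<lambda>y. K (x - y) * norm (x - y) powr (- (real d + \<alpha>))))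
       powr (- 1 / \<alpha>)"

definition distance_exact :: "('a::euclidean_space \<Rightarrow> real) \<Rightarrow> nat \<Rightarrow> real \<Rightarrow> bool" where
  "distance_exact K d \<alpha> \<longleftrightarrow>
     (\<forall>E. d_plane d E \<longrightarrow> (\<exists>c. \<forall>x. x \<notin> E \<longrightarrow> D_plane K d \<alpha> E x = c * infdist x E))"

end

theory Submission
  imports Defs "HOL-Real_Asymp.Real_Asymp"
begin

lemma maj_int_half:
  fixes \<gamma> :: real assumes g: "\<gamma> > 1/2"
  shows "set_integrable lborel {0..} (\<lambda>s. (2 + s) powr (-2*\<gamma>))"
proof -
  define F where "F = (\<lambda>s::real. - ((2+s) powr (1-2*\<gamma>)) / (2*\<gamma>-1))"
  have D: "(F has_real_derivative (2 + x) powr (-2*\<gamma>)) (at x)" if "x > -1" for x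
  proof -
    have "((\<lambda>s. (2+s) powr (1-2*\<gamma>)) has_real_derivative (1-2*\<gamma>) * (2+x) powr (1-2*\<gamma>-1) * 1) (at x)"
      using DERIV_fun_powr[of "\<lambda>s. 2+s" 1 x "1-2*\<gamma>"] that by (auto intro!: derivative_eq_intros)
    then have "(F has_real_derivative - ((1-2*\<gamma>) * (2+x) powr (1-2*\<gamma>-1) * 1) / (2*\<gamma>-1)) (at x)"
      unfolding F_def by (intro DERIV_cdivide DERIV_minus)
    moreover have "- ((1-2*\<gamma>) * (2+x) powr (1-2*\<gamma>-1) * 1) / (2*\<gamma>-1) = (2+x) powr (-2*\<gamma>)"
      using g by (simp add: divide_simps algebra_simps)
    ultimately show ?thesis by simp
  qed
  have "isCont F (-1)" unfolding F_def using g by (auto intro!: continuous_intros)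
  then have "(F \<longlongrightarrow> F (-1)) (at_right (-1))"
    by (simp add: isCont_def filterlim_at_split)
  then have L1: "((F \<circ> real_of_ereal) \<longlongrightarrow> - 1 / (2*\<gamma>-1)) (at_right (ereal (-1)))"
    unfolding ereal_tendsto_simps1 by (simp add: F_def)
  have "((\<lambda>s::real. (2+s) powr (1-2*\<gamma>)) \<longlongrightarrow> 0) at_top"
    using g by (intro tendsto_neg_powr) (auto intro!: filterlim_tendsto_add_at_top filterlim_ident)
  note lim = this
  have "(F \<longlongrightarrow> 0) at_top"
    using tendsto_divide_zero[OF tendsto_minus[OF lim, simplified], of "2*\<gamma>-1"] by (simp add: F_def)
  then have L2: "((F \<circ> real_of_ereal) \<longlongrightarrow> 0) (at_left \<infinity>)"
    unfolding ereal_tendsto_simps1 .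
  have "set_integrable lborel (einterval (ereal (-1)) \<infinity>) (\<lambda>s. (2 + s) powr (-2*\<gamma>))"
    apply (rule interval_integral_FTC_nonneg(1)[where F=F, OF _ _ _ _ L1 L2])
    using D by (auto intro!: continuous_intros)
  then show ?thesis
    by (rule set_integrable_subset) auto
qed

lemma int_pow1:
  fixes \<gamma> :: real assumes g: "\<gamma> > 1/2"
  shows "integrable lborel (\<lambda>s. (1 + s\<^sup>2) powr (-\<gamma>))"
proof -
  define m where "m = (\<lambda>s::real. indicator {0..} s * (2 + s) powr (-2*\<gamma>))"
  have i1: "integrable lborel m"
    using maj_int_half[OF g] unfolding set_integrable_def m_def by simp
  have i2: "integrable lborel (\<lambda>s. m (0 + (-1) * s))"
    by (rule lborel_integrable_real_affine[OF i1]) simp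
  have i3: "integrable lborel (\<lambda>s. 6 powr \<gamma> * (m s + m (0 + (-1) * s)))"
    using i1 i2 by auto
  have bnd: "(1 + s\<^sup>2) powr (-\<gamma>) \<le> 6 powr \<gamma> * (2 + s) powr (-2*\<gamma>)" if "s \<ge> 0" for s :: real
  proof -
    have "(2+s)\<^sup>2 \<le> 6 * (1 + s\<^sup>2)"
    proof -
      have "0 \<le> 5 * (s - 2/5)^2" by simp
      then show ?thesis by (simp add: power2_eq_square algebra_simps)
    qed
    then have "((2+s)\<^sup>2) powr \<gamma> \<le> (6 * (1 + s\<^sup>2)) powr \<gamma>"
      using g by (intro powr_mono2) auto
    also have "((2+s)\<^sup>2) powr \<gamma> = (2+s) powr (2*\<gamma>)"
    proof -
      have e: "(2+s) powr 2 = (2+s)^2" using that by (simp add: powr_numeral)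
      show ?thesis by (simp add: e[symmetric] powr_powr)
    qed
    also have "(6 * (1 + s\<^sup>2)) powr \<gamma> = 6 powr \<gamma> * (1 + s\<^sup>2) powr \<gamma>"
      by (rule powr_mult; simp)
    finally have "(2+s) powr (2*\<gamma>) \<le> 6 powr \<gamma> * (1 + s\<^sup>2) powr \<gamma>" .
    then show ?thesis
      using that by (simp add: powr_minus divide_simps mult.commute)
  qed
  show ?thesis
  proof (rule Bochner_Integration.integrable_bound[OF i3])
    show "(\<lambda>s. (1 + s\<^sup>2) powr (-\<gamma>)) \<in> borel_measurable lborel" by measurable
    show "AE x in lborel. norm ((1 + x\<^sup>2) powr (-\<gamma>)) \<le> norm (6 powr \<gamma> * (m x + m (0 + (-1) * x)))"
    proof (rule AE_I2)
      fix x :: real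
      have mn: "m y \<ge> 0" for y unfolding m_def by auto
      show "norm ((1 + x\<^sup>2) powr (-\<gamma>)) \<le> norm (6 powr \<gamma> * (m x + m (0 + (-1) * x)))"
      proof (cases "x \<ge> 0")
        case True
        then have "(1 + x\<^sup>2) powr (-\<gamma>) \<le> 6 powr \<gamma> * m x" using bnd[OF True] by (simp add: m_def)
        also have "\<dots> \<le> 6 powr \<gamma> * (m x + m (0 + (-1) * x))" using mn[of "-x"] by (intro mult_left_mono) auto
        finally show ?thesis using mn[of x] mn[of "-x"] by simp
      next
        case False
        then have "(1 + x\<^sup>2) powr (-\<gamma>) \<le> 6 powr \<gamma> * m (-x)" using bnd[of "-x"] by (simp add: m_def)
        also have "\<dots> \<le> 6 powr \<gamma> * (m x + m (0 + (-1) * x))" using mn[of x] by (intro mult_left_mono) auto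
        finally show ?thesis using mn[of x] mn[of "-x"] by simp
      qed
    qed
  qed
qed

definition Cg :: "real \<Rightarrow> real" where "Cg \<gamma> = (\<integral>s. (1 + s\<^sup>2) powr (-\<gamma>) \<partial>lborel)"

lemma Cg_pos: assumes g: "\<gamma> > 1/2" shows "Cg \<gamma> > 0"
proof -
  have "Cg \<gamma> \<ge> 0" unfolding Cg_def by (intro integral_nonneg_AE) auto
  moreover have "Cg \<gamma> \<noteq> 0"
  proof
    assume "Cg \<gamma> = 0"
    then have "AE s in lborel. (1 + s\<^sup>2) powr (-\<gamma>) = 0"
      unfolding Cg_def using integral_nonneg_eq_0_iff_AE[OF int_pow1[OF g]] by auto
    moreover have "AE s in lborel. (1 + s\<^sup>2) powr (-\<gamma>) = 0 \<longrightarrow> False"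
    proof (intro AE_I2 impI)
      fix s :: real assume "(1 + s\<^sup>2) powr (-\<gamma>) = 0"
      moreover have "1 + s\<^sup>2 \<noteq> 0" by (metis add_pos_nonneg zero_le_power2 zero_less_one not_less_iff_gr_or_eq)
      ultimately show False by simp
    qed
    ultimately have "AE (s::real) in lborel. False" using AE_mp[of "\<lambda>s. (1 + s\<^sup>2) powr (-\<gamma>) = 0" lborel "\<lambda>s. False"] by blast
    then show False using ae_filter_eq_bot_iff[of "lborel::real measure"] trivial_limit_def by (simp add: emeasure_lborel_UNIV)
  qed
  ultimately show ?thesis by simp
qed

lemma pow_T1:
  fixes \<gamma> \<sigma> :: real assumes g: "\<gamma> > 1/2" and s: "\<sigma> > 0"
  shows "integrable lborel (\<lambda>x. (\<sigma> + x\<^sup>2) powr (-\<gamma>))"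
    and "(\<integral>x. (\<sigma> + x\<^sup>2) powr (-\<gamma>) \<partial>lborel) = Cg \<gamma> * \<sigma> powr (1/2 - \<gamma>)"
proof -
  have sq: "sqrt \<sigma> \<noteq> 0" using s by simp
  have eq: "(\<sigma> + (0 + sqrt \<sigma> * x)\<^sup>2) powr (-\<gamma>) = \<sigma> powr (-\<gamma>) * (1 + x\<^sup>2) powr (-\<gamma>)" for x
  proof -
    have "\<sigma> + (0 + sqrt \<sigma> * x)\<^sup>2 = \<sigma> * (1 + x\<^sup>2)" using s by (simp add: power_mult_distrib algebra_simps)
    then show ?thesis using s by (simp add: powr_mult add_pos_nonneg)
  qed
  have "integrable lborel (\<lambda>x. (\<sigma> + (0 + sqrt \<sigma> * x)\<^sup>2) powr (-\<gamma>))"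
    unfolding eq using int_pow1[OF g] by simp
  then show "integrable lborel (\<lambda>x. (\<sigma> + x\<^sup>2) powr (-\<gamma>))"
    using lborel_integrable_real_affine_iff[OF sq, of "\<lambda>x. (\<sigma> + x\<^sup>2) powr (-\<gamma>)" 0] by simp
  have "(\<integral>x. (\<sigma> + x\<^sup>2) powr (-\<gamma>) \<partial>lborel) = \<bar>sqrt \<sigma>\<bar> *\<^sub>R (\<integral>x. (\<sigma> + (0 + sqrt \<sigma> * x)\<^sup>2) powr (-\<gamma>) \<partial>lborel)"
    by (rule lborel_integral_real_affine[OF sq])
  also have "\<dots> = sqrt \<sigma> * (\<sigma> powr (-\<gamma>) * Cg \<gamma>)"
    unfolding eq Cg_def using s by simp
  also have "\<dots> = Cg \<gamma> * \<sigma> powr (1/2 - \<gamma>)"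
  proof -
    have "sqrt \<sigma> * \<sigma> powr (-\<gamma>) = \<sigma> powr (1/2 - \<gamma>)"
      using s by (simp add: powr_half_sqrt[symmetric] powr_add[symmetric])
    then show ?thesis by (metis mult.assoc mult.commute)
  qed
  finally show "(\<integral>x. (\<sigma> + x\<^sup>2) powr (-\<gamma>) \<partial>lborel) = Cg \<gamma> * \<sigma> powr (1/2 - \<gamma>)" .
qed

definition T1 :: "(real \<Rightarrow> real) \<Rightarrow> real \<Rightarrow> real" where
  "T1 f \<sigma> = (\<integral>s. f (\<sigma> + s\<^sup>2) \<partial>lborel)"

definition cls :: "real \<Rightarrow> (real \<Rightarrow> real) \<Rightarrow> bool" where
  "cls \<gamma> f \<longleftrightarrow> f \<in> borel_measurable borel \<and> continuous_on {0<..} f \<and>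
     (\<exists>M. \<forall>v>0. \<bar>f v\<bar> \<le> M * v powr (-\<gamma>))"

lemma cls_bound_pos:
  fixes f :: "real \<Rightarrow> real"
  assumes "\<forall>v>0. \<bar>f v\<bar> \<le> M * v powr (-\<gamma>)" shows "M \<ge> 0"
proof -
  have "\<bar>f 1\<bar> \<le> M" using assms[rule_format, of 1] by simp
  then show ?thesis by simp
qed

lemma T1_integrable:
  fixes f :: "real \<Rightarrow> real" and \<gamma> M :: real
  assumes "f \<in> borel_measurable borel" "\<forall>v>0. \<bar>f v\<bar> \<le> M * v powr (-\<gamma>)"
    and g: "\<gamma> > 1/2" and s: "\<sigma> > 0"
  shows "integrable lborel (\<lambda>x. f (\<sigma> + x\<^sup>2))"
proof (rule Bochner_Integration.integrable_bound)
  show "integrable lborel (\<lambda>x. M * (\<sigma> + x\<^sup>2) powr (-\<gamma>))"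
    using pow_T1(1)[OF g s] by simp
  show "(\<lambda>x. f (\<sigma> + x\<^sup>2)) \<in> borel_measurable lborel" using assms(1) by measurable
  have M: "M \<ge> 0" by (rule cls_bound_pos[OF assms(2)])
  show "AE x in lborel. norm (f (\<sigma> + x\<^sup>2)) \<le> norm (M * (\<sigma> + x\<^sup>2) powr (-\<gamma>))"
  proof (rule AE_I2)
    fix x :: real
    have p: "\<sigma> + x\<^sup>2 > 0" using s by (simp add: add_pos_nonneg)
    show "norm (f (\<sigma> + x\<^sup>2)) \<le> norm (M * (\<sigma> + x\<^sup>2) powr (-\<gamma>))"
      using assms(2)[rule_format, OF p] M by simp
  qed
qed

lemma T1_bound:
  fixes f :: "real \<Rightarrow> real" and \<gamma> M :: real
  assumes "f \<in> borel_measurable borel" "\<forall>v>0. \<bar>f v\<bar> \<le> M * v powr (-\<gamma>)"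
    and g: "\<gamma> > 1/2" and s: "\<sigma> > 0"
  shows "\<bar>T1 f \<sigma>\<bar> \<le> (M * Cg \<gamma>) * \<sigma> powr (-(\<gamma> - 1/2))"
proof -
  have M: "M \<ge> 0" by (rule cls_bound_pos[OF assms(2)])
  have "\<bar>T1 f \<sigma>\<bar> \<le> (\<integral>x. norm (f (\<sigma> + x\<^sup>2)) \<partial>lborel)"
    unfolding T1_def using integral_norm_bound by (metis real_norm_def)
  also have "\<dots> \<le> (\<integral>x. M * (\<sigma> + x\<^sup>2) powr (-\<gamma>) \<partial>lborel)"
  proof (rule integral_mono)
    show "integrable lborel (\<lambda>x. norm (f (\<sigma> + x\<^sup>2)))"
      using T1_integrable[OF assms] by simp
    show "integrable lborel (\<lambda>x. M * (\<sigma> + x\<^sup>2) powr (-\<gamma>))"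
      using pow_T1(1)[OF g s] by simp
    fix x :: real
    have p: "\<sigma> + x\<^sup>2 > 0" using s by (simp add: add_pos_nonneg)
    show "norm (f (\<sigma> + x\<^sup>2)) \<le> M * (\<sigma> + x\<^sup>2) powr (-\<gamma>)"
      using assms(2)[rule_format, OF p] by simp
  qed
  also have "\<dots> = M * (Cg \<gamma> * \<sigma> powr (1/2 - \<gamma>))"
    using pow_T1(2)[OF g s] by simp
  finally show ?thesis by (simp add: algebra_simps)
qed

lemma T1_meas:
  assumes [measurable]: "f \<in> borel_measurable borel"
  shows "T1 f \<in> borel_measurable borel"
proof -
  have "(\<lambda>\<sigma>. \<integral>s. f (\<sigma> + s\<^sup>2) \<partial>lborel) \<in> borel_measurable borel"
    by measurable
  then show ?thesis unfolding T1_def[abs_def] .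
qed

lemma T1_cont:
  fixes f :: "real \<Rightarrow> real" and \<gamma> M :: real
  assumes meas: "f \<in> borel_measurable borel" and bnd: "\<forall>v>0. \<bar>f v\<bar> \<le> M * v powr (-\<gamma>)"
    and cont: "continuous_on {0<..} f" and g: "\<gamma> > 1/2"
  shows "continuous_on {0<..} (T1 f)"
proof (rule continuous_on_sequentiallyI)
  fix u :: "nat \<Rightarrow> real" and a :: real
  assume u: "\<forall>n. u n \<in> {0<..}" and a: "a \<in> {0<..}" and lim: "u \<longlonglongrightarrow> a"
  have a0: "a > 0" using a by simp
  have M: "M \<ge> 0" by (rule cls_bound_pos[OF bnd])
  define v where "v n = max (u n) (a/2)" for n
  have vlim: "v \<longlonglongrightarrow> a" unfolding v_def
    using tendsto_max[OF lim tendsto_const[of "a/2"]] a0 by (simp add: max_def)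
  have ev: "eventually (\<lambda>n. u n = v n) sequentially"
  proof -
    have "eventually (\<lambda>n. u n > a/2) sequentially"
      using lim a0 by (intro order_tendstoD(1)) auto
    then show ?thesis by eventually_elim (simp add: v_def)
  qed
  have "(\<lambda>n. T1 f (v n)) \<longlonglongrightarrow> T1 f a"
    unfolding T1_def
  proof (rule integral_dominated_convergence[where w="\<lambda>x. M * (a/2 + x\<^sup>2) powr (-\<gamma>)"])
    show "(\<lambda>x. f (a + x\<^sup>2)) \<in> borel_measurable lborel" using meas by measurable
    show "(\<lambda>x. f (v i + x\<^sup>2)) \<in> borel_measurable lborel" for i using meas by measurable
    show "integrable lborel (\<lambda>x. M * (a/2 + x\<^sup>2) powr (-\<gamma>))"
      using pow_T1(1)[OF g, of "a/2"] a0 by simp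
    show "AE x in lborel. (\<lambda>i. f (v i + x\<^sup>2)) \<longlonglongrightarrow> f (a + x\<^sup>2)"
    proof (rule AE_I2)
      fix x :: real
      have p: "a + x\<^sup>2 > 0" using a0 by (simp add: add_pos_nonneg)
      have "isCont f (a + x\<^sup>2)"
        using cont p by (simp add: continuous_on_eq_continuous_at)
      moreover have "(\<lambda>i. v i + x\<^sup>2) \<longlonglongrightarrow> a + x\<^sup>2" using vlim by (intro tendsto_intros)
      ultimately show "(\<lambda>i. f (v i + x\<^sup>2)) \<longlonglongrightarrow> f (a + x\<^sup>2)"
        by (rule isCont_tendsto_compose)
    qed
    show "AE x in lborel. norm (f (v i + x\<^sup>2)) \<le> M * (a/2 + x\<^sup>2) powr (-\<gamma>)" for i
    proof (rule AE_I2)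
      fix x :: real
      have vi: "v i \<ge> a/2" by (simp add: v_def)
      have p: "a/2 + x\<^sup>2 > 0" using a0 by (simp add: add_pos_nonneg)
      have p2: "v i + x\<^sup>2 > 0" using p vi by linarith
      have "norm (f (v i + x\<^sup>2)) \<le> M * (v i + x\<^sup>2) powr (-\<gamma>)"
        using bnd[rule_format, OF p2] by simp
      also have "\<dots> \<le> M * (a/2 + x\<^sup>2) powr (-\<gamma>)"
        using M g p vi by (intro mult_left_mono powr_mono2') auto
      finally show "norm (f (v i + x\<^sup>2)) \<le> M * (a/2 + x\<^sup>2) powr (-\<gamma>)" .
    qed
  qed
  moreover have "eventually (\<lambda>n. T1 f (v n) = T1 f (u n)) sequentially"
    using ev by eventually_elim simp
  ultimately show "(\<lambda>n. T1 f (u n)) \<longlonglongrightarrow> T1 f a"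
    by (rule Lim_transform_eventually)
qed

lemma cls_T1:
  assumes "cls \<gamma> f" "\<gamma> > 1/2" shows "cls (\<gamma> - 1/2) (T1 f)"
proof -
  obtain M where meas: "f \<in> borel_measurable borel" and cont: "continuous_on {0<..} f"
    and bnd: "\<forall>v>0. \<bar>f v\<bar> \<le> M * v powr (-\<gamma>)"
    using assms(1) unfolding cls_def by blast
  show ?thesis unfolding cls_def
    using T1_meas[OF meas] T1_cont[OF meas bnd cont assms(2)] T1_bound[OF meas bnd assms(2)]
    by blast
qed

lemma cls_T1_iter:
  assumes "cls \<gamma> f" "\<gamma> > real k / 2" shows "cls (\<gamma> - real k / 2) ((T1 ^^ k) f)"
  using assms
proof (induction k)
  case 0 then show ?case by simp
next
  case (Suc k)
  have "cls (\<gamma> - real k / 2) ((T1 ^^ k) f)" using Suc by simp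
  then have "cls (\<gamma> - real k / 2 - 1/2) (T1 ((T1 ^^ k) f))"
    using Suc.prems by (intro cls_T1) auto
  then show ?case by (simp add: algebra_simps add_divide_distrib)
qed

lemma T1_cong:
  assumes "\<forall>v>0. f v = g v" "\<sigma> > 0" shows "T1 f \<sigma> = T1 g \<sigma>"
  unfolding T1_def
proof (rule Bochner_Integration.integral_cong[OF refl])
  fix x :: real
  have "\<sigma> + x\<^sup>2 > 0" using assms(2) by (simp add: add_pos_nonneg)
  then show "f (\<sigma> + x\<^sup>2) = g (\<sigma> + x\<^sup>2)" using assms(1) by simp
qed

lemma T1_iter_cong:
  assumes "\<forall>v>0. f v = g v" shows "\<forall>\<sigma>>0. (T1 ^^ k) f \<sigma> = (T1 ^^ k) g \<sigma>"
proof (induction k)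
  case 0 then show ?case using assms by simp
next
  case (Suc k) then show ?case using T1_cong by simp
qed

lemma T1_iter_scale:
  "(T1 ^^ k) (\<lambda>v. c * f v) = (\<lambda>\<sigma>. c * (T1 ^^ k) f \<sigma>)"
proof (induction k)
  case 0 then show ?case by simp
next
  case (Suc k) then show ?case by (simp add: T1_def[abs_def])
qed

fun Pc :: "real \<Rightarrow> nat \<Rightarrow> real" where
  "Pc \<gamma> 0 = 1"
| "Pc \<gamma> (Suc k) = Cg \<gamma> * Pc (\<gamma> - 1/2) k"

lemma Pc_pos: "\<gamma> > real k / 2 \<Longrightarrow> Pc \<gamma> k > 0"
proof (induction k arbitrary: \<gamma>)
  case 0 then show ?case by simp
next
  case (Suc k)
  have "Cg \<gamma> > 0" using Suc.prems by (intro Cg_pos) auto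
  moreover have "Pc (\<gamma> - 1/2) k > 0" using Suc by (intro Suc.IH) (auto simp: field_simps)
  ultimately show ?case by simp
qed

lemma T1_iter_pow:
  "\<gamma> > real k / 2 \<Longrightarrow> \<sigma> > 0 \<Longrightarrow>
     (T1 ^^ k) (\<lambda>v. v powr (-\<gamma>)) \<sigma> = Pc \<gamma> k * \<sigma> powr (real k / 2 - \<gamma>)"
proof (induction k arbitrary: \<gamma> \<sigma>)
  case 0 then show ?case by simp
next
  case (Suc k)
  have g: "\<gamma> > 1/2" using Suc.prems by (auto simp: field_simps)
  have e1: "\<forall>v>0. T1 (\<lambda>v. v powr (-\<gamma>)) v = Cg \<gamma> * v powr (-(\<gamma> - 1/2))"
    using pow_T1(2)[OF g] by (simp add: T1_def)
  have "(T1 ^^ Suc k) (\<lambda>v. v powr (-\<gamma>)) \<sigma> = (T1 ^^ k) (T1 (\<lambda>v. v powr (-\<gamma>))) \<sigma>"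
    by (simp add: funpow_Suc_right del: funpow.simps)
  also have "\<dots> = (T1 ^^ k) (\<lambda>v. Cg \<gamma> * v powr (-(\<gamma> - 1/2))) \<sigma>"
    using T1_iter_cong[OF e1] Suc.prems by simp
  also have "\<dots> = Cg \<gamma> * (T1 ^^ k) (\<lambda>v. v powr (-(\<gamma> - 1/2))) \<sigma>"
    by (simp add: T1_iter_scale)
  also have "\<dots> = Cg \<gamma> * (Pc (\<gamma> - 1/2) k * \<sigma> powr (real k / 2 - (\<gamma> - 1/2)))"
    using Suc.prems by (subst Suc.IH) (auto simp: field_simps)
  also have "\<dots> = Pc \<gamma> (Suc k) * \<sigma> powr (real (Suc k) / 2 - \<gamma>)"
    by (simp add: algebra_simps add_divide_distrib)
  finally show ?case .
qed

abbreviation PM :: "nat \<Rightarrow> (nat \<Rightarrow> real) measure" where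
  "PM k \<equiv> PiM {..<k} (\<lambda>_. lborel)"

definition SS :: "nat \<Rightarrow> (nat \<Rightarrow> real) \<Rightarrow> (nat \<Rightarrow> real) \<Rightarrow> real" where
  "SS k c t = (\<Sum>i<k. (t i - c i)\<^sup>2)"

lemma SS_nonneg: "SS k c t \<ge> 0" unfolding SS_def by (intro sum_nonneg) auto

lemma SS_Suc: "SS (Suc k) c (x(k := y)) = SS k c x + (y - c k)\<^sup>2"
  unfolding SS_def by (simp add: sum.lessThan_Suc)

lemma SS_meas[measurable]: "SS k c \<in> borel_measurable (PM k)"
  unfolding SS_def[abs_def] by measurable

lemma nn_pow_PM:
  "\<gamma> > real k / 2 \<Longrightarrow> \<rho> > 0 \<Longrightarrow>
    (\<integral>\<^sup>+t. ennreal ((\<rho> + SS k c t) powr (-\<gamma>)) \<partial>PM k) = ennreal (Pc \<gamma> k * \<rho> powr (real k / 2 - \<gamma>))"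
proof (induction k arbitrary: \<gamma> \<rho>)
  case 0
  then show ?case by (simp add: SS_def PiM_empty)
next
  case (Suc k)
  interpret product_sigma_finite "\<lambda>_::nat. (lborel::real measure)" by standard
  have g: "\<gamma> > 1/2" using Suc.prems by (auto simp: field_simps)
  have "(\<integral>\<^sup>+t. ennreal ((\<rho> + SS (Suc k) c t) powr (-\<gamma>)) \<partial>PM (Suc k))
      = (\<integral>\<^sup>+x. (\<integral>\<^sup>+y. ennreal ((\<rho> + SS (Suc k) c (x(k := y))) powr (-\<gamma>)) \<partial>lborel) \<partial>PM k)"
  proof -
    have ins: "PM (Suc k) = PiM (insert k {..<k}) (\<lambda>_. lborel)" by (simp add: lessThan_Suc)
    have mm: "(\<lambda>t. ennreal ((\<rho> + SS (Suc k) c t) powr (-\<gamma>))) \<in> borel_measurable (PM (Suc k))"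
      by measurable
    show ?thesis
      using product_nn_integral_insert[of "{..<k}" k "\<lambda>t. ennreal ((\<rho> + SS (Suc k) c t) powr (-\<gamma>))"]
        mm unfolding ins by simp
  qed
  also have "\<dots> = (\<integral>\<^sup>+x. ennreal (Cg \<gamma>) * ennreal ((\<rho> + SS k c x) powr (-(\<gamma> - 1/2))) \<partial>PM k)"
  proof (rule nn_integral_cong)
    fix x :: "nat \<Rightarrow> real"
    define r where "r = \<rho> + SS k c x"
    have r: "r > 0" unfolding r_def using Suc.prems SS_nonneg[of k c x] by linarith
    have "(\<integral>\<^sup>+y. ennreal ((\<rho> + SS (Suc k) c (x(k := y))) powr (-\<gamma>)) \<partial>lborel)
        = (\<integral>\<^sup>+y. ennreal ((r + (y - c k)\<^sup>2) powr (-\<gamma>)) \<partial>lborel)"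
      by (simp add: SS_Suc r_def add.assoc)
    also have "\<dots> = (\<integral>\<^sup>+y. ennreal ((r + (c k + 1 * y - c k)\<^sup>2) powr (-\<gamma>)) \<partial>lborel)"
      by (subst nn_integral_real_affine[where c=1 and t="c k"]) auto
    also have "\<dots> = (\<integral>\<^sup>+y. ennreal ((r + y\<^sup>2) powr (-\<gamma>)) \<partial>lborel)" by simp
    also have "\<dots> = ennreal (\<integral>y. (r + y\<^sup>2) powr (-\<gamma>) \<partial>lborel)"
      by (rule nn_integral_eq_integral[OF pow_T1(1)[OF g r]]) auto
    also have "\<dots> = ennreal (Cg \<gamma>) * ennreal (r powr (-(\<gamma> - 1/2)))"
      using pow_T1(2)[OF g r] Cg_pos[OF g] by (simp add: ennreal_mult)
    finally show "(\<integral>\<^sup>+y. ennreal ((\<rho> + SS (Suc k) c (x(k := y))) powr (-\<gamma>)) \<partial>lborel)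
        = ennreal (Cg \<gamma>) * ennreal ((\<rho> + SS k c x) powr (-(\<gamma> - 1/2)))" unfolding r_def .
  qed
  also have "\<dots> = ennreal (Cg \<gamma>) * (\<integral>\<^sup>+x. ennreal ((\<rho> + SS k c x) powr (-(\<gamma> - 1/2))) \<partial>PM k)"
    by (rule nn_integral_cmult) measurable
  also have "\<dots> = ennreal (Cg \<gamma>) * ennreal (Pc (\<gamma> - 1/2) k * \<rho> powr (real k / 2 - (\<gamma> - 1/2)))"
    using Suc.prems by (subst Suc.IH) (auto simp: field_simps)
  also have "\<dots> = ennreal (Cg \<gamma> * (Pc (\<gamma> - 1/2) k * \<rho> powr (real k / 2 - (\<gamma> - 1/2))))"
  proof -
    have "Pc (\<gamma> - 1/2) k > 0" using Suc.prems by (intro Pc_pos) (auto simp: field_simps)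
    then show ?thesis using Cg_pos[OF g] by (simp add: ennreal_mult)
  qed
  also have "\<dots> = ennreal (Pc \<gamma> (Suc k) * \<rho> powr (real (Suc k) / 2 - \<gamma>))"
    by (simp add: algebra_simps add_divide_distrib)
  finally show ?case .
qed

lemma PM_integrable:
  assumes "cls \<gamma> f" "\<gamma> > real k / 2" "\<rho> > 0"
  shows "integrable (PM k) (\<lambda>t. f (\<rho> + SS k c t))"
proof -
  obtain M where meas[measurable]: "f \<in> borel_measurable borel"
    and bnd: "\<forall>v>0. \<bar>f v\<bar> \<le> M * v powr (-\<gamma>)"
    using assms(1) unfolding cls_def by blast
  have M: "M \<ge> 0" by (rule cls_bound_pos[OF bnd])
  have i: "integrable (PM k) (\<lambda>t. (\<rho> + SS k c t) powr (-\<gamma>))"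
    by (rule integrableI_nn_integral_finite[OF _ _ nn_pow_PM[OF assms(2,3)]]) auto
  show ?thesis
  proof (rule Bochner_Integration.integrable_bound)
    show "integrable (PM k) (\<lambda>t. M * (\<rho> + SS k c t) powr (-\<gamma>))" using i by simp
    show "(\<lambda>t. f (\<rho> + SS k c t)) \<in> borel_measurable (PM k)" by measurable
    show "AE x in PM k. norm (f (\<rho> + SS k c x)) \<le> norm (M * (\<rho> + SS k c x) powr (-\<gamma>))"
    proof (rule AE_I2)
      fix x
      have p: "\<rho> + SS k c x > 0" using assms(3) SS_nonneg[of k c x] by linarith
      show "norm (f (\<rho> + SS k c x)) \<le> norm (M * (\<rho> + SS k c x) powr (-\<gamma>))"
        using bnd[rule_format, OF p] M by simp
    qed
  qed
qed

lemma PM_integral: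
  "cls \<gamma> f \<Longrightarrow> \<gamma> > real k / 2 \<Longrightarrow> \<rho> > 0 \<Longrightarrow>
    (\<integral>t. f (\<rho> + SS k c t) \<partial>PM k) = (T1 ^^ k) f \<rho>"
proof (induction k arbitrary: \<gamma> f \<rho>)
  case 0
  then show ?case by (simp add: SS_def PiM_empty)
next
  case (Suc k)
  interpret product_sigma_finite "\<lambda>_::nat. (lborel::real measure)" by standard
  have g: "\<gamma> > 1/2" using Suc.prems by (auto simp: field_simps)
  have meas[measurable]: "f \<in> borel_measurable borel" using Suc.prems unfolding cls_def by blast
  have "(\<integral>t. f (\<rho> + SS (Suc k) c t) \<partial>PM (Suc k))
      = (\<integral>x. (\<integral>y. f (\<rho> + SS (Suc k) c (x(k := y))) \<partial>lborel) \<partial>PM k)"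
  proof -
    have ins: "PM (Suc k) = PiM (insert k {..<k}) (\<lambda>_. lborel)" by (simp add: lessThan_Suc)
    show ?thesis
      using product_integral_insert[of "{..<k}" k "\<lambda>t. f (\<rho> + SS (Suc k) c t)"]
        PM_integrable[OF Suc.prems, of c] unfolding ins by simp
  qed
  also have "\<dots> = (\<integral>x. T1 f (\<rho> + SS k c x) \<partial>PM k)"
  proof (rule Bochner_Integration.integral_cong[OF refl])
    fix x :: "nat \<Rightarrow> real"
    define r where "r = \<rho> + SS k c x"
    have "(\<integral>y. f (\<rho> + SS (Suc k) c (x(k := y))) \<partial>lborel) = (\<integral>y. f (r + (y - c k)\<^sup>2) \<partial>lborel)"
      by (simp add: SS_Suc r_def add.assoc)
    also have "\<dots> = \<bar>1\<bar> *\<^sub>R (\<integral>y. f (r + (c k + 1 * y - c k)\<^sup>2) \<partial>lborel)"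
      by (rule lborel_integral_real_affine) simp
    also have "\<dots> = T1 f r" by (simp add: T1_def)
    finally show "(\<integral>y. f (\<rho> + SS (Suc k) c (x(k := y))) \<partial>lborel) = T1 f (\<rho> + SS k c x)"
      unfolding r_def .
  qed
  also have "\<dots> = (T1 ^^ k) (T1 f) \<rho>"
    using Suc.prems by (intro Suc.IH[of "\<gamma> - 1/2"] cls_T1) (auto simp: field_simps)
  also have "\<dots> = (T1 ^^ Suc k) f \<rho>"
    by (simp add: funpow_Suc_right del: funpow.simps)
  finally show ?case .
qed

definition kk :: "real \<Rightarrow> real \<Rightarrow> real" where
  "kk a \<sigma> = (if \<sigma> > a then (\<sigma> - a) powr (-1/2) else 0)"

lemma kk_meas[measurable]: "kk a \<in> borel_measurable borel"
  unfolding kk_def[abs_def] by measurable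

lemma sq_less: fixes x r :: real shows "- r < x \<Longrightarrow> x < r \<Longrightarrow> x\<^sup>2 < r\<^sup>2"
proof -
  assume "- r < x" "x < r"
  then have "0 < (r - x) * (r + x)" by (intro mult_pos_pos) auto
  then show ?thesis by (simp add: power2_eq_square algebra_simps)
qed

lemma powr_mhalf: "x > 0 \<Longrightarrow> x powr (-1/2) = 1 / sqrt x"
  by (simp add: powr_minus_divide powr_half_sqrt)

lemma powr_mhalf': "x > 0 \<Longrightarrow> x powr (- (1/2)) = 1 / sqrt x"
  by (simp add: powr_minus_divide powr_half_sqrt)

lemma arcsin_int:
  fixes w :: real assumes w: "w > 0"
  shows "set_integrable lborel (einterval (- sqrt w) (sqrt w)) (\<lambda>s. (w - s\<^sup>2) powr (-1/2))"
    and "(LBINT s=- sqrt w..sqrt w. (w - s\<^sup>2) powr (-1/2)) = pi"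
proof -
  define r where "r = sqrt w"
  have r: "r > 0" "r * r = w" using w by (auto simp: r_def)
  define F where "F = (\<lambda>s. arcsin (s / r))"
  have D: "(F has_real_derivative (w - x\<^sup>2) powr (-1/2)) (at x)" if "- r < x" "x < r" for x
  proof -
    have x1: "-1 < x / r" "x / r < 1" using that r by (auto simp: field_simps)
    have "(F has_real_derivative inverse (sqrt (1 - (x/r)\<^sup>2)) * (1 / r)) (at x)"
      unfolding F_def using DERIV_arcsin[OF x1] x1 r(1)
      by (auto intro!: derivative_eq_intros DERIV_chain2[where f=arcsin])
    moreover have "inverse (sqrt (1 - (x/r)\<^sup>2)) * (1 / r) = (w - x\<^sup>2) powr (-1/2)"
    proof -
      have wx: "w - x\<^sup>2 > 0"
      proof -
        have "x\<^sup>2 < r\<^sup>2" using that by (rule sq_less)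
        then show ?thesis using r by (simp add: power2_eq_square)
      qed
      have "sqrt (1 - (x/r)\<^sup>2) * r = sqrt (w - x\<^sup>2)"
      proof -
        have "(1 - (x/r)\<^sup>2) * r\<^sup>2 = w - x\<^sup>2" using r w by (simp add: field_simps power2_eq_square)
        then have "sqrt ((1 - (x/r)\<^sup>2) * r\<^sup>2) = sqrt (w - x\<^sup>2)" by simp
        then show ?thesis using r by (simp add: real_sqrt_mult)
      qed
      then show ?thesis using wx r by (simp add: powr_mhalf' divide_simps)
    qed
    ultimately show ?thesis by simp
  qed
  have cF: "continuous_on {-r..r} F" unfolding F_def using r
    by (intro continuous_intros) (auto simp: field_simps)
  have LA: "((F \<circ> real_of_ereal) \<longlongrightarrow> - (pi/2)) (at_right (ereal (- r)))"
  proof -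
    have "(F \<longlongrightarrow> F (-r)) (at (-r) within {-r..r})"
      using cF r by (simp add: continuous_on_def)
    then have "(F \<longlongrightarrow> F (-r)) (at_right (-r))"
      using r by (simp add: at_within_Icc_at_right)
    then show ?thesis unfolding ereal_tendsto_simps1 using r by (simp add: F_def)
  qed
  have LB: "((F \<circ> real_of_ereal) \<longlongrightarrow> pi/2) (at_left (ereal r))"
  proof -
    have "(F \<longlongrightarrow> F r) (at r within {-r..r})"
      using cF r by (simp add: continuous_on_def)
    then have "(F \<longlongrightarrow> F r) (at_left r)"
      using r by (simp add: at_within_Icc_at_left)
    then show ?thesis unfolding ereal_tendsto_simps1 using r by (simp add: F_def)
  qed
  have ab: "ereal (- r) < ereal r" using r by simp
  note FTC = interval_integral_FTC_nonneg[OF ab, of F "\<lambda>s. (w - s\<^sup>2) powr (-1/2)", OF _ _ _ LA LB]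
  have hyp1: "\<And>x. ereal (- r) < ereal x \<Longrightarrow> ereal x < ereal r \<Longrightarrow> (F has_real_derivative (w - x\<^sup>2) powr (-1/2)) (at x)"
    using D by simp
  have hyp2: "\<And>x. ereal (- r) < ereal x \<Longrightarrow> ereal x < ereal r \<Longrightarrow> isCont (\<lambda>s. (w - s\<^sup>2) powr (-1/2)) x"
  proof -
    fix x assume "ereal (- r) < ereal x" "ereal x < ereal r"
    then have "x\<^sup>2 < r\<^sup>2" by (intro sq_less) auto
    then have "x\<^sup>2 < w" using r by (simp add: power2_eq_square)
    then show "isCont (\<lambda>s. (w - s\<^sup>2) powr (-1/2)) x" by (auto intro!: continuous_intros)
  qed
  have hyp3: "AE x in lborel. ereal (- r) < ereal x \<longrightarrow> ereal x < ereal r \<longrightarrow> 0 \<le> (w - x\<^sup>2) powr (-1/2)"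
    by simp
  show "set_integrable lborel (einterval (- sqrt w) (sqrt w)) (\<lambda>s. (w - s\<^sup>2) powr (-1/2))"
    using FTC(1)[OF hyp1 hyp2 hyp3] unfolding r_def .
  show "(LBINT s=- sqrt w..sqrt w. (w - s\<^sup>2) powr (-1/2)) = pi"
    using FTC(2)[OF hyp1 hyp2 hyp3] unfolding r_def by simp
qed

lemma kk_shift:
  fixes a v :: real
  shows "integrable lborel (\<lambda>s. kk a (v - s\<^sup>2))"
    and "(\<integral>s. kk a (v - s\<^sup>2) \<partial>lborel) = (if v > a then pi else 0)"
proof -
  have "integrable lborel (\<lambda>s. kk a (v - s\<^sup>2)) \<and> (\<integral>s. kk a (v - s\<^sup>2) \<partial>lborel) = (if v > a then pi else 0)"
  proof (cases "v > a")
    case False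
    then have "\<And>s. kk a (v - s\<^sup>2) = 0" unfolding kk_def
      by (auto simp: not_less) (smt (verit) zero_le_power2)
    then show ?thesis using False by simp
  next
    case True
    define w where "w = v - a"
    have w: "w > 0" using True by (simp add: w_def)
    have eq: "kk a (v - s\<^sup>2) = indicator (einterval (- sqrt w) (sqrt w)) s *\<^sub>R (w - s\<^sup>2) powr (-1/2)" for s
    proof -
      have "(v - s\<^sup>2 > a) \<longleftrightarrow> s\<^sup>2 < w" by (auto simp: w_def)
      also have "\<dots> \<longleftrightarrow> sqrt (s\<^sup>2) < sqrt w" by (rule real_sqrt_less_iff[symmetric])
      also have "\<dots> \<longleftrightarrow> s \<in> einterval (- sqrt w) (sqrt w)"
        by (auto simp: einterval_eq abs_less_iff)
      finally have iff: "(v - s\<^sup>2 > a) \<longleftrightarrow> s \<in> einterval (- sqrt w) (sqrt w)" .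
      show ?thesis unfolding kk_def using iff by (simp add: w_def indicator_def algebra_simps)
    qed
    have si: "set_integrable lborel (einterval (- sqrt w) (sqrt w)) (\<lambda>s. (w - s\<^sup>2) powr (-1/2))"
      by (rule arcsin_int(1)[OF w])
    then have i: "integrable lborel (\<lambda>s. kk a (v - s\<^sup>2))"
      unfolding eq set_integrable_def .
    have "(\<integral>s. kk a (v - s\<^sup>2) \<partial>lborel) = (LBINT s=- sqrt w..sqrt w. (w - s\<^sup>2) powr (-1/2))"
      unfolding eq interval_lebesgue_integral_def set_lebesgue_integral_def using w by simp
    then show ?thesis using i arcsin_int(2)[OF w] True by simp
  qed
  then show "integrable lborel (\<lambda>s. kk a (v - s\<^sup>2))"
    and "(\<integral>s. kk a (v - s\<^sup>2) \<partial>lborel) = (if v > a then pi else 0)" by auto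
qed

lemma kap_int:
  fixes a b :: real assumes ab: "a < b"
  shows "integrable lborel (\<lambda>\<sigma>. kk a \<sigma> - kk b \<sigma>)"
proof -
  define p1 where "p1 = (\<lambda>\<sigma>::real. (\<sigma> - a) powr (-1/2))"
  define p2 where "p2 = (\<lambda>\<sigma>::real. (\<sigma> - b) powr (-1/2) - (\<sigma> - a) powr (-1/2))"
  have i1: "set_integrable lborel (einterval a b) p1"
  proof -
    define F where "F = (\<lambda>\<sigma>::real. 2 * sqrt (\<sigma> - a))"
    have D: "(F has_real_derivative p1 x) (at x)" if "a < x" for x
    proof -
      have "(F has_real_derivative 2 * (inverse (sqrt (x - a)) / 2 * 1)) (at x)"
        unfolding F_def using that by (auto intro!: derivative_eq_intros)
      moreover have "2 * (inverse (sqrt (x - a)) / 2 * 1) = p1 x"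
      proof -
        have "p1 x = inverse (sqrt (x - a))" unfolding p1_def
          using powr_mhalf[of "x - a"] that by (metis inverse_eq_divide diff_gt_0_iff_gt)
        then show ?thesis by simp
      qed
      ultimately show ?thesis by simp
    qed
    have cF: "continuous_on {a..b} F" unfolding F_def by (intro continuous_intros)
    have LA: "((F \<circ> real_of_ereal) \<longlongrightarrow> 0) (at_right (ereal a))"
    proof -
      have "(F \<longlongrightarrow> F a) (at a within {a..b})" using cF ab by (simp add: continuous_on_def)
      then have "(F \<longlongrightarrow> F a) (at_right a)" using ab by (simp add: at_within_Icc_at_right)
      then show ?thesis unfolding ereal_tendsto_simps1 by (simp add: F_def)
    qed
    have LB: "((F \<circ> real_of_ereal) \<longlongrightarrow> F b) (at_left (ereal b))"
    proof -
      have "(F \<longlongrightarrow> F b) (at b within {a..b})" using cF ab by (simp add: continuous_on_def)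
      then have "(F \<longlongrightarrow> F b) (at_left b)" using ab by (simp add: at_within_Icc_at_left)
      then show ?thesis unfolding ereal_tendsto_simps1 .
    qed
    have C: "isCont p1 x" if "a < x" for x unfolding p1_def using that by (auto intro!: continuous_intros)
    have N: "AE x in lborel. ereal a < ereal x \<longrightarrow> ereal x < ereal b \<longrightarrow> 0 \<le> p1 x"
      by (simp add: p1_def)
    show ?thesis
      using ab by (intro interval_integral_FTC_nonneg(1)[where F=F, OF _ _ _ N LA LB]) (auto intro!: D C)
  qed
  have i2: "set_integrable lborel (einterval b \<infinity>) p2"
  proof -
    define F where "F = (\<lambda>\<sigma>::real. 2 * sqrt (\<sigma> - b) - 2 * sqrt (\<sigma> - a))"
    have D: "(F has_real_derivative p2 x) (at x)" if "b < x" for x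
    proof -
      have "(F has_real_derivative 2 * (inverse (sqrt (x - b)) / 2 * 1) - 2 * (inverse (sqrt (x - a)) / 2 * 1)) (at x)"
        unfolding F_def using that ab by (auto intro!: derivative_eq_intros)
      moreover have "2 * (inverse (sqrt (x - b)) / 2 * 1) - 2 * (inverse (sqrt (x - a)) / 2 * 1) = p2 x"
      proof -
        have "p2 x = inverse (sqrt (x - b)) - inverse (sqrt (x - a))" unfolding p2_def
          using powr_mhalf[of "x - a"] powr_mhalf[of "x - b"] that ab
          by (metis inverse_eq_divide diff_gt_0_iff_gt less_trans)
        then show ?thesis by simp
      qed
      ultimately show ?thesis by simp
    qed
    have cF: "continuous_on {b..b+1} F" unfolding F_def by (intro continuous_intros)
    have LA: "((F \<circ> real_of_ereal) \<longlongrightarrow> F b) (at_right (ereal b))"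
    proof -
      have "(F \<longlongrightarrow> F b) (at b within {b..b+1})" using cF by (simp add: continuous_on_def)
      then have "(F \<longlongrightarrow> F b) (at_right b)" by (simp add: at_within_Icc_at_right)
      then show ?thesis unfolding ereal_tendsto_simps1 .
    qed
    have LB: "((F \<circ> real_of_ereal) \<longlongrightarrow> 0) (at_left \<infinity>)"
    proof -
      have "(F \<longlongrightarrow> 0) at_top" unfolding F_def by real_asymp
      then show ?thesis unfolding ereal_tendsto_simps1 .
    qed
    have nn: "p2 x \<ge> 0" if "b < x" for x
      unfolding p2_def using that ab by (auto intro!: powr_mono2')
    have C: "isCont p2 x" if "b < x" for x unfolding p2_def using that ab by (auto intro!: continuous_intros)
    have N: "AE x in lborel. ereal b < ereal x \<longrightarrow> ereal x < \<infinity> \<longrightarrow> 0 \<le> p2 x"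
      using nn by simp
    show ?thesis
      by (intro interval_integral_FTC_nonneg(1)[where F=F, OF _ _ _ N LA LB]) (auto intro!: D C)
  qed
  have i3: "integrable lborel (\<lambda>\<sigma>. indicator (einterval a b) \<sigma> *\<^sub>R p1 \<sigma> - indicator (einterval b \<infinity>) \<sigma> *\<^sub>R p2 \<sigma>)"
    using i1 i2 unfolding set_integrable_def by auto
  show ?thesis
  proof (rule integrable_cong_AE_imp[OF i3])
    show "(\<lambda>\<sigma>. kk a \<sigma> - kk b \<sigma>) \<in> borel_measurable lborel" by measurable
    show "AE x in lborel. indicator (einterval a b) x *\<^sub>R p1 x - indicator (einterval b \<infinity>) x *\<^sub>R p2 x = kk a x - kk b x"
      using AE_lborel_singleton[of b]
    proof eventually_elim
      fix x :: real assume "x \<noteq> b"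
      then show "indicator (einterval a b) x *\<^sub>R p1 x - indicator (einterval b \<infinity>) x *\<^sub>R p2 x = kk a x - kk b x"
        using ab by (auto simp: kk_def p1_def p2_def indicator_def einterval_eq)
    qed
  qed
qed

lemma inj_step:
  fixes f :: "real \<Rightarrow> real" and \<gamma> a b :: real
  assumes cf: "cls \<gamma> f" and g: "\<gamma> > 1/2" and T0: "\<forall>\<sigma>>0. T1 f \<sigma> = 0"
    and a: "0 < a" and ab: "a < b"
  shows "(\<integral>v. indicator {a<..b} v * f v \<partial>lborel) = 0"
proof -
  obtain M where meas[measurable]: "f \<in> borel_measurable borel"
    and bnd: "\<forall>v>0. \<bar>f v\<bar> \<le> M * v powr (-\<gamma>)"
    using cf unfolding cls_def by blast
  have M: "M \<ge> 0" by (rule cls_bound_pos[OF bnd])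
  define \<kappa> where "\<kappa> = (\<lambda>\<sigma>. kk a \<sigma> - kk b \<sigma>)"
  have \<kappa>_meas[measurable]: "\<kappa> \<in> borel_measurable borel" unfolding \<kappa>_def by measurable
  have \<kappa>0: "\<kappa> \<sigma> = 0" if "\<sigma> \<le> a" for \<sigma> using that ab by (simp add: \<kappa>_def kk_def)
  have \<kappa>i: "integrable lborel \<kappa>" unfolding \<kappa>_def by (rule kap_int[OF ab])
  define B where "B = M * Cg \<gamma> * a powr (-(\<gamma> - 1/2))"
  have absf_meas: "(\<lambda>v. \<bar>f v\<bar>) \<in> borel_measurable borel" by measurable
  have absbnd: "\<forall>v>0. \<bar>\<bar>f v\<bar>\<bar> \<le> M * v powr (-\<gamma>)" using bnd by simp
  have inner: "(\<integral>s. \<bar>f (\<sigma> + s\<^sup>2)\<bar> \<partial>lborel) \<le> B" if "\<sigma> > a" for \<sigma>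
  proof -
    have s0: "\<sigma> > 0" using that a by simp
    have "(\<integral>s. \<bar>f (\<sigma> + s\<^sup>2)\<bar> \<partial>lborel) \<le> \<bar>T1 (\<lambda>v. \<bar>f v\<bar>) \<sigma>\<bar>" by (simp add: T1_def)
    also have "\<dots> \<le> (M * Cg \<gamma>) * \<sigma> powr (-(\<gamma> - 1/2))"
      by (rule T1_bound[OF absf_meas absbnd g s0])
    also have "\<dots> \<le> (M * Cg \<gamma>) * a powr (-(\<gamma> - 1/2))"
      using M Cg_pos[OF g] g that a by (intro mult_left_mono powr_mono2') auto
    finally show ?thesis by (simp add: B_def)
  qed
  have B0: "B \<ge> 0" unfolding B_def using M Cg_pos[OF g] by simp
  define \<Phi> where "\<Phi> = (\<lambda>\<sigma> s. \<kappa> \<sigma> * f (\<sigma> + s\<^sup>2))"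
  have \<Phi>_meas[measurable]: "case_prod \<Phi> \<in> borel_measurable (lborel \<Otimes>\<^sub>M lborel)"
    unfolding \<Phi>_def by measurable
  have \<Phi>sec: "integrable lborel (\<lambda>s. \<Phi> \<sigma> s)" for \<sigma>
  proof (cases "\<sigma> > a")
    case True
    then have "integrable lborel (\<lambda>s. f (\<sigma> + s\<^sup>2))"
      using a by (intro T1_integrable[OF meas bnd g]) auto
    then show ?thesis unfolding \<Phi>_def by simp
  next
    case False then show ?thesis unfolding \<Phi>_def using \<kappa>0[of \<sigma>] by simp
  qed
  have \<Phi>int: "integrable (lborel \<Otimes>\<^sub>M lborel) (case_prod \<Phi>)"
  proof (rule lborel_pair.Fubini_integrable)
    show "case_prod \<Phi> \<in> borel_measurable (lborel \<Otimes>\<^sub>M lborel)" by (rule \<Phi>_meas)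
    show "AE x in lborel. integrable lborel (\<lambda>y. case_prod \<Phi> (x, y))"
      using \<Phi>sec by simp
    show "integrable lborel (\<lambda>x. \<integral>y. norm (case_prod \<Phi> (x, y)) \<partial>lborel)"
    proof (rule Bochner_Integration.integrable_bound)
      show "integrable lborel (\<lambda>\<sigma>. B * \<bar>\<kappa> \<sigma>\<bar>)" using \<kappa>i by auto
      show "(\<lambda>x. \<integral>y. norm (case_prod \<Phi> (x, y)) \<partial>lborel) \<in> borel_measurable lborel"
        unfolding \<Phi>_def by measurable
      show "AE x in lborel. norm (\<integral>y. norm (case_prod \<Phi> (x, y)) \<partial>lborel) \<le> norm (B * \<bar>\<kappa> x\<bar>)"
      proof (rule AE_I2)
        fix \<sigma> :: real
        have e: "(\<integral>y. norm (case_prod \<Phi> (\<sigma>, y)) \<partial>lborel) = \<bar>\<kappa> \<sigma>\<bar> * (\<integral>s. \<bar>f (\<sigma> + s\<^sup>2)\<bar> \<partial>lborel)"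
          unfolding \<Phi>_def by (simp add: abs_mult)
        have nn: "(\<integral>s. \<bar>f (\<sigma> + s\<^sup>2)\<bar> \<partial>lborel) \<ge> 0" by simp
        show "norm (\<integral>y. norm (case_prod \<Phi> (\<sigma>, y)) \<partial>lborel) \<le> norm (B * \<bar>\<kappa> \<sigma>\<bar>)"
        proof (cases "\<sigma> > a")
          case True
          then have "\<bar>\<kappa> \<sigma>\<bar> * (\<integral>s. \<bar>f (\<sigma> + s\<^sup>2)\<bar> \<partial>lborel) \<le> \<bar>\<kappa> \<sigma>\<bar> * B"
            using inner by (intro mult_left_mono) auto
          then show ?thesis unfolding e using nn B0 by (simp add: abs_mult mult.commute)
        next
          case False then show ?thesis unfolding e using \<kappa>0[of \<sigma>] by simp
        qed
      qed
    qed
  qed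
  have F1: "(\<integral>s. (\<integral>\<sigma>. \<Phi> \<sigma> s \<partial>lborel) \<partial>lborel) = 0"
  proof -
    have "(\<integral>s. (\<integral>\<sigma>. \<Phi> \<sigma> s \<partial>lborel) \<partial>lborel) = (\<integral>\<sigma>. (\<integral>s. \<Phi> \<sigma> s \<partial>lborel) \<partial>lborel)"
      by (rule lborel_pair.Fubini_integral[OF \<Phi>int])
    also have "\<dots> = 0"
    proof -
      have z: "(\<integral>s. \<Phi> \<sigma> s \<partial>lborel) = 0" for \<sigma>
      proof (cases "\<sigma> > a")
        case True
        then have "T1 f \<sigma> = 0" using T0 a by simp
        then show ?thesis unfolding \<Phi>_def T1_def by simp
      next
        case False then show ?thesis unfolding \<Phi>_def using \<kappa>0[of \<sigma>] by simp
      qed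
      show ?thesis by (simp add: z)
    qed
    finally show ?thesis by simp
  qed
  define \<Psi> where "\<Psi> = (\<lambda>s v. \<kappa> (v - s\<^sup>2) * f v)"
  have shift: "(\<integral>\<sigma>. h \<sigma> s \<partial>lborel) = (\<integral>v. h (v - s\<^sup>2) s \<partial>lborel)" for h :: "real \<Rightarrow> real \<Rightarrow> real" and s
    using lborel_integral_real_affine[of 1 "\<lambda>\<sigma>. h \<sigma> s" "- s\<^sup>2"] by simp
  have shift_int: "integrable lborel (\<lambda>\<sigma>. h \<sigma> s) \<longleftrightarrow> integrable lborel (\<lambda>v. h (v - s\<^sup>2) s)"
    for h :: "real \<Rightarrow> real \<Rightarrow> real" and s
    using lborel_integrable_real_affine_iff[of 1 "\<lambda>\<sigma>. h \<sigma> s" "- s\<^sup>2"] by simp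
  have PsiPhi: "\<Psi> s v = \<Phi> (v - s\<^sup>2) s" for s v unfolding \<Psi>_def \<Phi>_def by simp
  have \<Psi>_meas[measurable]: "case_prod \<Psi> \<in> borel_measurable (lborel \<Otimes>\<^sub>M lborel)"
    unfolding \<Psi>_def by measurable
  have \<Psi>int: "integrable (lborel \<Otimes>\<^sub>M lborel) (case_prod \<Psi>)"
  proof (rule lborel_pair.Fubini_integrable)
    show "case_prod \<Psi> \<in> borel_measurable (lborel \<Otimes>\<^sub>M lborel)" by (rule \<Psi>_meas)
    have "AE s in lborel. integrable lborel (\<lambda>\<sigma>. \<Phi> \<sigma> s)"
      by (rule lborel_pair.AE_integrable_snd[OF \<Phi>int])
    then show "AE x in lborel. integrable lborel (\<lambda>y. case_prod \<Psi> (x, y))"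
    proof eventually_elim
      fix s assume "integrable lborel (\<lambda>\<sigma>. \<Phi> \<sigma> s)"
      then show "integrable lborel (\<lambda>y. case_prod \<Psi> (s, y))"
        using shift_int[of \<Phi> s] by (simp add: PsiPhi)
    qed
    have ni: "integrable (lborel \<Otimes>\<^sub>M lborel) (\<lambda>(\<sigma>, s). norm (\<Phi> \<sigma> s))"
      using integrable_norm[OF \<Phi>int] by (simp add: case_prod_beta')
    have "integrable lborel (\<lambda>s. \<integral>\<sigma>. norm (\<Phi> \<sigma> s) \<partial>lborel)"
      by (rule lborel_pair.integrable_snd[OF ni])
    moreover have "(\<integral>\<sigma>. norm (\<Phi> \<sigma> s) \<partial>lborel) = (\<integral>y. norm (case_prod \<Psi> (s, y)) \<partial>lborel)" for s
      using shift[of "\<lambda>\<sigma> s. norm (\<Phi> \<sigma> s)" s] by (simp add: PsiPhi)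
    ultimately show "integrable lborel (\<lambda>x. \<integral>y. norm (case_prod \<Psi> (x, y)) \<partial>lborel)" by simp
  qed
  have F2: "(\<integral>s. (\<integral>v. \<Psi> s v \<partial>lborel) \<partial>lborel) = 0"
  proof -
    have "(\<integral>v. \<Psi> s v \<partial>lborel) = (\<integral>\<sigma>. \<Phi> \<sigma> s \<partial>lborel)" for s
      using shift[of \<Phi> s] by (simp add: PsiPhi)
    then show ?thesis using F1 by simp
  qed
  have F3: "(\<integral>v. (\<integral>s. \<Psi> s v \<partial>lborel) \<partial>lborel) = 0"
    using lborel_pair.Fubini_integral[OF \<Psi>int] F2 by simp
  have inner2: "(\<integral>s. \<Psi> s v \<partial>lborel) = pi * (indicator {a<..b} v * f v)" for v
  proof -
    have "(\<integral>s. \<Psi> s v \<partial>lborel) = (\<integral>s. kk a (v - s\<^sup>2) - kk b (v - s\<^sup>2) \<partial>lborel) * f v"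
      unfolding \<Psi>_def \<kappa>_def by simp
    also have "(\<integral>s. kk a (v - s\<^sup>2) - kk b (v - s\<^sup>2) \<partial>lborel)
        = (\<integral>s. kk a (v - s\<^sup>2) \<partial>lborel) - (\<integral>s. kk b (v - s\<^sup>2) \<partial>lborel)"
      by (rule Bochner_Integration.integral_diff[OF kk_shift(1) kk_shift(1)])
    also have "\<dots> = pi * indicator {a<..b} v"
      unfolding kk_shift(2) using ab by (auto simp: indicator_def)
    finally show ?thesis by simp
  qed
  have "(\<integral>v. pi * (indicator {a<..b} v * f v) \<partial>lborel) = 0"
    using F3 inner2 by simp
  then show ?thesis by simp
qed

lemma zero_from_intervals:
  fixes f :: "real \<Rightarrow> real"
  assumes meas[measurable]: "f \<in> borel_measurable borel" and cont: "continuous_on {0<..} f"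
    and H: "\<And>a b. 0 < a \<Longrightarrow> a < b \<Longrightarrow> (\<integral>v. indicator {a<..b} v * f v \<partial>lborel) = 0"
    and v0: "v0 > 0"
  shows "f v0 = 0"
proof (rule ccontr)
  assume ne: "f v0 \<noteq> 0"
  define e where "e = \<bar>f v0\<bar> / 2"
  have e: "e > 0" using ne by (simp add: e_def)
  have "isCont f v0" using cont v0 by (simp add: continuous_on_eq_continuous_at)
  then obtain \<delta> where d: "\<delta> > 0" and dd: "\<And>v. \<bar>v - v0\<bar> < \<delta> \<Longrightarrow> \<bar>f v - f v0\<bar> < e"
    using e unfolding continuous_at_eps_delta dist_real_def by blast
  define \<delta>' where "\<delta>' = min \<delta> (v0/2)"
  have d': "\<delta>' > 0" "\<delta>' \<le> \<delta>" "\<delta>' \<le> v0/2" using d v0 by (auto simp: \<delta>'_def)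
  define a where "a = v0 - \<delta>'/2"
  define b where "b = v0 + \<delta>'/2"
  have a: "0 < a" and ab: "a < b" using d' v0 by (auto simp: a_def b_def)
  define s where "s = sgn (f v0)"
  have s: "\<bar>s\<bar> = 1" "s * f v0 = \<bar>f v0\<bar>" using ne by (auto simp: s_def sgn_if)
  have inI: "\<bar>v - v0\<bar> < \<delta>" if "v \<in> {a<..b}" for v
    using that d' by (auto simp: a_def b_def abs_if)
  have lower: "s * f v > e" if "v \<in> {a<..b}" for v
  proof -
    have "\<bar>f v - f v0\<bar> < e" using dd[OF inI[OF that]] .
    moreover have "\<bar>s * f v - s * f v0\<bar> = \<bar>s\<bar> * \<bar>f v - f v0\<bar>"
      by (simp add: right_diff_distrib[symmetric] abs_mult)
    ultimately have "\<bar>s * f v - s * f v0\<bar> < e" using s(1) by simp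
    then show ?thesis using s(2) by (simp add: e_def abs_if split: if_splits)
  qed
  have upper: "\<bar>f v\<bar> \<le> \<bar>f v0\<bar> + e" if "v \<in> {a<..b}" for v
    using dd[OF inI[OF that]] by linarith
  have intI: "integrable lborel (\<lambda>v. indicator {a<..b} v * (\<bar>f v0\<bar> + e))"
    using ab by (intro integrable_mult_left integrable_real_indicator) auto
  have int1: "integrable lborel (\<lambda>v. indicator {a<..b} v * (s * f v))"
  proof (rule Bochner_Integration.integrable_bound[OF intI])
    show "(\<lambda>v. indicator {a<..b} v * (s * f v)) \<in> borel_measurable lborel" by measurable
    show "AE x in lborel. norm (indicator {a<..b} x * (s * f x)) \<le> norm (indicator {a<..b} x * (\<bar>f v0\<bar> + e))"
      using upper e s by (intro AE_I2) (auto simp: indicator_def abs_mult)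
  qed
  have "(\<integral>v. indicator {a<..b} v * e \<partial>lborel) \<le> (\<integral>v. indicator {a<..b} v * (s * f v) \<partial>lborel)"
  proof (rule integral_mono[OF _ int1])
    show "integrable lborel (\<lambda>v. indicator {a<..b} v * e)"
      using ab by (intro integrable_mult_left integrable_real_indicator) auto
    fix v show "indicator {a<..b} v * e \<le> indicator {a<..b} v * (s * f v)"
      using lower[of v] by (auto simp: indicator_def)
  qed
  also have "(\<integral>v. indicator {a<..b} v * (s * f v) \<partial>lborel) = s * (\<integral>v. indicator {a<..b} v * f v \<partial>lborel)"
    by (simp add: mult.left_commute)
  also have "\<dots> = 0" using H[OF a ab] by simp
  finally have "(\<integral>v. indicator {a<..b} v * e \<partial>lborel) \<le> 0" .
  moreover have "(\<integral>v. indicator {a<..b} v * e \<partial>lborel) = (b - a) * e"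
    using ab by simp
  ultimately show False using ab e by (simp add: mult_le_0_iff)
qed

lemma T1_inj:
  fixes f :: "real \<Rightarrow> real"
  assumes cf: "cls \<gamma> f" and g: "\<gamma> > 1/2" and T0: "\<forall>\<sigma>>0. T1 f \<sigma> = 0"
  shows "\<forall>v>0. f v = 0"
proof (intro allI impI)
  fix v :: real assume v: "v > 0"
  have meas: "f \<in> borel_measurable borel" and cont: "continuous_on {0<..} f"
    using cf unfolding cls_def by auto
  show "f v = 0"
    by (rule zero_from_intervals[OF meas cont inj_step[OF cf g T0] v])
qed

lemma T1_iter_inj:
  "cls \<gamma> f \<Longrightarrow> \<gamma> > real k / 2 \<Longrightarrow> \<forall>\<sigma>>0. (T1 ^^ k) f \<sigma> = 0 \<Longrightarrow> \<forall>v>0. f v = 0"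
proof (induction k arbitrary: \<gamma> f)
  case 0 then show ?case by simp
next
  case (Suc k)
  have g: "\<gamma> > 1/2" using Suc.prems by (auto simp: field_simps)
  have c1: "cls (\<gamma> - 1/2) (T1 f)" by (rule cls_T1[OF Suc.prems(1) g])
  have "\<forall>\<sigma>>0. (T1 ^^ k) (T1 f) \<sigma> = 0"
    using Suc.prems(3) by (simp add: funpow_Suc_right del: funpow.simps)
  then have "\<forall>v>0. T1 f v = 0"
    using Suc.prems by (intro Suc.IH[OF c1]) (auto simp: field_simps)
  then show ?case by (rule T1_inj[OF Suc.prems(1) g])
qed

lemma powr_abs_real: "(x::real) powr a = \<bar>x\<bar> powr a"
  by (cases "x \<ge> 0") (auto simp: powr_def ln_minus)

definition Hf :: "(real \<Rightarrow> real) \<Rightarrow> real \<Rightarrow> real \<Rightarrow> real" where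
  "Hf Kt \<beta> q = (if q > 0 then Kt (sqrt q) * sqrt q powr (-\<beta>) else 0)"

lemma sqrt_powr: "q > 0 \<Longrightarrow> sqrt q powr (-\<beta>) = q powr (-(\<beta>/2))"
  by (simp add: powr_half_sqrt[symmetric] powr_powr)

lemma cls_Hf:
  assumes cont: "continuous_on {0<..} Kt" and B: "\<forall>r>0. \<bar>Kt r\<bar> \<le> B0"
  shows "cls (\<beta>/2) (Hf Kt \<beta>)"
  unfolding cls_def
proof (intro conjI)
  have c1: "continuous_on {0<..} (\<lambda>q. Kt (sqrt q) * sqrt q powr (-\<beta>))"
  proof (intro continuous_intros)
    show "continuous_on {0<..} (\<lambda>q. Kt (sqrt q))"
      by (rule continuous_on_compose2[OF cont]) (auto intro!: continuous_intros)
  qed auto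
  have eq: "Hf Kt \<beta> = (\<lambda>q. if q \<in> {0<..} then Kt (sqrt q) * sqrt q powr (-\<beta>) else 0)"
    by (auto simp: Hf_def fun_eq_iff)
  show "Hf Kt \<beta> \<in> borel_measurable borel"
    unfolding eq by (rule borel_measurable_continuous_on_if[OF _ c1]) auto
  show "continuous_on {0<..} (Hf Kt \<beta>)"
    using c1 by (rule continuous_on_cong[THEN iffD1, rotated 2]) (auto simp: Hf_def)
  show "\<exists>M. \<forall>v>0. \<bar>Hf Kt \<beta> v\<bar> \<le> M * v powr (- (\<beta>/2))"
  proof (intro exI allI impI)
    fix v :: real assume v: "v > 0"
    have "\<bar>Hf Kt \<beta> v\<bar> = \<bar>Kt (sqrt v)\<bar> * v powr (-(\<beta>/2))"
      using v by (simp add: Hf_def abs_mult sqrt_powr)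
    also have "\<dots> \<le> B0 * v powr (-(\<beta>/2))"
      using B v by (intro mult_right_mono) auto
    finally show "\<bar>Hf Kt \<beta> v\<bar> \<le> B0 * v powr (- (\<beta>/2))" .
  qed
qed

lemma cls_pow: "cls \<gamma> (\<lambda>q. q powr (-\<gamma>))"
  unfolding cls_def
proof (intro conjI)
  show "(\<lambda>q::real. q powr (-\<gamma>)) \<in> borel_measurable borel" by measurable
  show "continuous_on {0<..} (\<lambda>q::real. q powr (-\<gamma>))" by (auto intro!: continuous_intros)
  show "\<exists>M. \<forall>v>0. \<bar>v powr (-\<gamma>)\<bar> \<le> M * v powr (-\<gamma>)" by (intro exI[of _ 1]) auto
qed

lemma cls_lin:
  assumes "cls \<gamma> f" "cls \<gamma> g" shows "cls \<gamma> (\<lambda>q. f q - l * g q)"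
proof -
  obtain M1 where f: "f \<in> borel_measurable borel" "continuous_on {0<..} f" "\<forall>v>0. \<bar>f v\<bar> \<le> M1 * v powr (-\<gamma>)"
    using assms(1) unfolding cls_def by blast
  obtain M2 where g: "g \<in> borel_measurable borel" "continuous_on {0<..} g" "\<forall>v>0. \<bar>g v\<bar> \<le> M2 * v powr (-\<gamma>)"
    using assms(2) unfolding cls_def by blast
  show ?thesis unfolding cls_def
  proof (intro conjI)
    show "(\<lambda>q. f q - l * g q) \<in> borel_measurable borel" using f g by measurable
    show "continuous_on {0<..} (\<lambda>q. f q - l * g q)" using f g by (auto intro!: continuous_intros)
    show "\<exists>M. \<forall>v>0. \<bar>f v - l * g v\<bar> \<le> M * v powr (-\<gamma>)"
    proof (intro exI allI impI)
      fix v :: real assume v: "v > 0"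
      have "\<bar>f v - l * g v\<bar> \<le> \<bar>f v\<bar> + \<bar>l\<bar> * \<bar>g v\<bar>" by (simp add: abs_mult abs_triangle_ineq4[THEN order_trans])
      also have "\<dots> \<le> M1 * v powr (-\<gamma>) + \<bar>l\<bar> * (M2 * v powr (-\<gamma>))"
        using f(3) g(3) v by (intro add_mono mult_left_mono) auto
      finally show "\<bar>f v - l * g v\<bar> \<le> (M1 + \<bar>l\<bar> * M2) * v powr (-\<gamma>)" by (simp add: algebra_simps)
    qed
  qed
qed

lemma main_analytic:
  fixes Kt :: "real \<Rightarrow> real" and d :: nat and \<alpha> :: real
  assumes a: "\<alpha> > 0" and cont: "continuous_on {0<..} Kt" and B: "\<forall>r>0. \<bar>Kt r\<bar> \<le> B0"
    and EX: "\<forall>\<rho>>0. \<bar>(T1 ^^ d) (Hf Kt (real d + \<alpha>)) \<rho>\<bar> powr (-1/\<alpha>) = c * sqrt \<rho>"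
  shows "\<exists>l. \<forall>r>0. Kt r = l"
proof -
  define \<gamma> where "\<gamma> = (real d + \<alpha>) / 2"
  have gd: "\<gamma> > real d / 2" using a by (simp add: \<gamma>_def field_simps)
  define H where "H = Hf Kt (real d + \<alpha>)"
  have cH: "cls \<gamma> H" unfolding H_def \<gamma>_def by (rule cls_Hf[OF cont B])
  define FF where "FF = (T1 ^^ d) H"
  have cFF: "cls (\<gamma> - real d / 2) FF" unfolding FF_def by (rule cls_T1_iter[OF cH gd])
  have FFc: "continuous_on {0<..} FF" using cFF unfolding cls_def by blast
  have ex: "\<forall>\<rho>>0. \<bar>FF \<rho>\<bar> powr (-1/\<alpha>) = c * sqrt \<rho>" using EX by (simp add: FF_def H_def)
  have "\<exists>\<mu>. \<forall>\<rho>>0. FF \<rho> = \<mu> * \<rho> powr (-(\<alpha>/2))"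
  proof (cases "c > 0")
    case False
    have "FF \<rho> = 0" if "\<rho> > 0" for \<rho>
    proof -
      have "\<bar>FF \<rho>\<bar> powr (-1/\<alpha>) \<ge> 0" by simp
      moreover have "c * sqrt \<rho> \<le> 0" using False that by (simp add: mult_nonpos_nonneg)
      moreover have "\<bar>FF \<rho>\<bar> powr (-1/\<alpha>) = c * sqrt \<rho>" using ex that by auto
      ultimately have "\<bar>FF \<rho>\<bar> powr (-1/\<alpha>) = 0" by linarith
      then show ?thesis by simp
    qed
    then show ?thesis by (intro exI[of _ 0]) auto
  next
    case True
    have absFF: "\<bar>FF \<rho>\<bar> = c powr (-\<alpha>) * \<rho> powr (-(\<alpha>/2))" if "\<rho> > 0" for \<rho>
    proof -
      have e: "\<bar>FF \<rho>\<bar> powr (-1/\<alpha>) = c * sqrt \<rho>" using ex that by auto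
      have "c * sqrt \<rho> > 0" using True that by simp
      then have nz: "\<bar>FF \<rho>\<bar> \<noteq> 0" using e by auto
      have "\<bar>FF \<rho>\<bar> = (\<bar>FF \<rho>\<bar> powr (-1/\<alpha>)) powr (-\<alpha>)"
        using nz a by (simp add: powr_powr)
      also have "\<dots> = (c * sqrt \<rho>) powr (-\<alpha>)" using e by simp
      also have "\<dots> = c powr (-\<alpha>) * \<rho> powr (-(\<alpha>/2))"
        using True that by (simp add: powr_mult sqrt_powr)
      finally show ?thesis .
    qed
    have nz: "FF \<rho> \<noteq> 0" if "\<rho> > 0" for \<rho> using absFF[OF that] True that by auto
    have sign: "(\<forall>\<rho>>0. FF \<rho> > 0) \<or> (\<forall>\<rho>>0. FF \<rho> < 0)"
    proof (rule ccontr)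
      assume "\<not> ?thesis"
      then obtain \<rho>1 \<rho>2 where r1: "\<rho>1 > 0" "FF \<rho>1 \<le> 0" and r2: "\<rho>2 > 0" "FF \<rho>2 \<ge> 0"
        by (auto simp: not_less)
      then have n1: "FF \<rho>1 < 0" and n2: "FF \<rho>2 > 0" using nz by (auto simp: order.order_iff_strict)
      have cc: "continuous_on {min \<rho>1 \<rho>2 .. max \<rho>1 \<rho>2} FF"
        by (rule continuous_on_subset[OF FFc]) (use r1 r2 in auto)
      obtain x where x: "min \<rho>1 \<rho>2 \<le> x" "x \<le> max \<rho>1 \<rho>2" "FF x = 0"
      proof (cases "\<rho>1 \<le> \<rho>2")
        case True
        then show ?thesis using IVT'[of FF \<rho>1 0 \<rho>2] cc n1 n2 that by auto
      next
        case False
        then show ?thesis using IVT2'[of FF \<rho>1 0 \<rho>2] cc n1 n2 that by auto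
      qed
      have "x > 0" using x(1) r1 r2 by linarith
      then show False using nz x(3) by auto
    qed
    then show ?thesis
    proof
      assume P: "\<forall>\<rho>>0. FF \<rho> > 0"
      have "FF \<rho> = c powr (-\<alpha>) * \<rho> powr (-(\<alpha>/2))" if "\<rho> > 0" for \<rho>
        using absFF[OF that] P that by (metis abs_of_pos)
      then show ?thesis by blast
    next
      assume P: "\<forall>\<rho>>0. FF \<rho> < 0"
      have "FF \<rho> = (- (c powr (-\<alpha>))) * \<rho> powr (-(\<alpha>/2))" if "\<rho> > 0" for \<rho>
        using absFF[OF that] P that by (metis abs_of_neg minus_minus mult_minus_left)
      then show ?thesis by blast
    qed
  qed
  then obtain \<mu> where mu: "\<forall>\<rho>>0. FF \<rho> = \<mu> * \<rho> powr (-(\<alpha>/2))" by blast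
  define A where "A = Pc \<gamma> d"
  have A: "A > 0" unfolding A_def by (rule Pc_pos[OF gd])
  have G: "(T1 ^^ d) (\<lambda>q. q powr (-\<gamma>)) \<rho> = A * \<rho> powr (-(\<alpha>/2))" if "\<rho> > 0" for \<rho>
    using T1_iter_pow[OF gd that] by (simp add: A_def \<gamma>_def field_simps)
  define l where "l = \<mu> / A"
  define \<psi> where "\<psi> = (\<lambda>q. H q - l * q powr (-\<gamma>))"
  have c\<psi>: "cls \<gamma> \<psi>" unfolding \<psi>_def by (rule cls_lin[OF cH cls_pow])
  have z: "\<forall>\<rho>>0. (T1 ^^ d) \<psi> \<rho> = 0"
  proof (intro allI impI)
    fix \<rho> :: real assume r: "\<rho> > 0"
    have "(T1 ^^ d) \<psi> \<rho> = (\<integral>t. \<psi> (\<rho> + SS d (\<lambda>_. 0) t) \<partial>PM d)"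
      by (rule PM_integral[OF c\<psi> gd r, symmetric])
    also have "\<dots> = (\<integral>t. H (\<rho> + SS d (\<lambda>_. 0) t) \<partial>PM d) - l * (\<integral>t. (\<rho> + SS d (\<lambda>_. 0) t) powr (-\<gamma>) \<partial>PM d)"
      unfolding \<psi>_def
      using PM_integrable[OF cH gd r, of "\<lambda>_. 0"] PM_integrable[OF cls_pow gd r, of "\<lambda>_. 0"] by simp
    also have "\<dots> = FF \<rho> - l * (A * \<rho> powr (-(\<alpha>/2)))"
      using PM_integral[OF cH gd r, of "\<lambda>_. 0"] PM_integral[OF cls_pow gd r, of "\<lambda>_. 0"] G[OF r]
      by (simp add: FF_def)
    also have "\<dots> = 0" using mu r A by (simp add: l_def)
    finally show "(T1 ^^ d) \<psi> \<rho> = 0" .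
  qed
  have z2: "\<forall>v>0. \<psi> v = 0" by (rule T1_iter_inj[OF c\<psi> gd z])
  show ?thesis
  proof (intro exI allI impI)
    fix r :: real assume r: "r > 0"
    define v where "v = r\<^sup>2"
    have v: "v > 0" "sqrt v = r" using r by (auto simp: v_def)
    have "H v = l * v powr (-\<gamma>)" using z2 v by (simp add: \<psi>_def)
    moreover have "H v = Kt r * v powr (-\<gamma>)"
    proof -
      have "H v = Kt (sqrt v) * sqrt v powr (-(real d + \<alpha>))" using v(1) by (simp add: H_def Hf_def)
      also have "\<dots> = Kt r * v powr (-\<gamma>)"
        using sqrt_powr[OF v(1), of "real d + \<alpha>"] v(2) by (simp add: \<gamma>_def)
      finally show ?thesis .
    qed
    ultimately show "Kt r = l" using v by simp
  qed
qed

lemma norm_sum_orth: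
  fixes v :: "nat \<Rightarrow> 'a::real_inner"
  assumes on: "\<forall>i<d. \<forall>j<d. v i \<bullet> v j = (if i = j then 1 else 0)"
  shows "(norm (\<Sum>i<d. s i *\<^sub>R v i))\<^sup>2 = (\<Sum>i<d. (s i)\<^sup>2)"
proof -
  have "(norm (\<Sum>i<d. s i *\<^sub>R v i))\<^sup>2 = (\<Sum>i<d. s i *\<^sub>R v i) \<bullet> (\<Sum>j<d. s j *\<^sub>R v j)"
    by (simp add: power2_norm_eq_inner)
  also have "\<dots> = (\<Sum>i<d. (s i *\<^sub>R v i) \<bullet> (\<Sum>j<d. s j *\<^sub>R v j))"
    by (rule inner_sum_left)
  also have "\<dots> = (\<Sum>i<d. \<Sum>j<d. s i * s j * (v i \<bullet> v j))"
    by (simp add: inner_sum_right mult.assoc mult.left_commute)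
  also have "\<dots> = (\<Sum>i<d. \<Sum>j<d. (if j = i then s i * s i else 0))"
    using on by (intro sum.cong refl) auto
  also have "\<dots> = (\<Sum>i<d. (s i)\<^sup>2)" by (simp add: power2_eq_square)
  finally show ?thesis .
qed

lemma frame_sum_in:
  assumes "plane_frame d E a v" shows "a + (\<Sum>i<d. t i *\<^sub>R v i) \<in> E"
  using assms unfolding plane_frame_def by auto

lemma geo:
  fixes K :: "real ^ 'n \<Rightarrow> real" and d :: nat and \<alpha> :: real and Kt :: "real \<Rightarrow> real"
  assumes dn: "d < CARD('n)" and a: "\<alpha> > 0"
    and de: "distance_exact K d \<alpha>" and KK: "\<forall>x. K x = Kt (norm x)"
    and cont: "continuous_on {0<..} Kt" and B: "\<forall>r>0. \<bar>Kt r\<bar> \<le> B0"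
  shows "\<exists>c. \<forall>\<rho>>0. \<bar>(T1 ^^ d) (Hf Kt (real d + \<alpha>)) \<rho>\<bar> powr (-1/\<alpha>) = c * sqrt \<rho>"
proof -
  obtain h where hb: "bij_betw h {0..<card (UNIV::'n set)} (UNIV::'n set)"
    using ex_bij_betw_nat_finite[of "UNIV::'n set"] by auto
  have hinj: "h i = h j \<longleftrightarrow> i = j" if "i \<le> d" "j \<le> d" for i j
    using hb that dn unfolding bij_betw_def inj_on_def by auto
  define e where "e i = (axis (h i) (1::real) :: real ^ 'n)" for i
  have ee: "e i \<bullet> e j = (if i = j then 1 else 0)" if "i \<le> d" "j \<le> d" for i j
    using hinj[OF that] by (simp add: e_def inner_axis_axis)
  define E where "E = (\<lambda>t. 0 + (\<Sum>i<d. t i *\<^sub>R e i)) ` (UNIV :: (nat \<Rightarrow> real) set)"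
  have frame0: "plane_frame d E 0 e"
    unfolding plane_frame_def E_def using ee by auto
  have memE: "y \<in> E \<longleftrightarrow> (\<exists>t. y = (\<Sum>i<d. t i *\<^sub>R e i))" for y unfolding E_def by auto
  have sub: "subspace E"
    unfolding subspace_def
  proof (intro conjI ballI allI)
    show "0 \<in> E" unfolding memE by (intro exI[of _ "\<lambda>_. 0"]) simp
    fix x y assume "x \<in> E" "y \<in> E"
    then obtain s t where "x = (\<Sum>i<d. s i *\<^sub>R e i)" "y = (\<Sum>i<d. t i *\<^sub>R e i)" unfolding memE by blast
    then show "x + y \<in> E" unfolding memE
      by (intro exI[of _ "\<lambda>i. s i + t i"]) (simp add: sum.distrib scaleR_add_left)
  next
    fix c x assume "x \<in> E"
    then obtain s where "x = (\<Sum>i<d. s i *\<^sub>R e i)" unfolding memE by blast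
    then show "c *\<^sub>R x \<in> E" unfolding memE
      by (intro exI[of _ "\<lambda>i. c * s i"]) (simp add: scaleR_sum_right)
  qed
  have einE: "e j \<in> E" if "j < d" for j
  proof -
    have "(\<Sum>i<d. (if i = j then 1 else 0) *\<^sub>R e i) = (\<Sum>i<d. if i = j then e i else 0)"
      by (rule sum.cong) auto
    also have "\<dots> = e j" using that by (simp add: sum.delta)
    finally have "(\<Sum>i<d. (if i = j then 1 else 0) *\<^sub>R e i) = e j" .
    then show ?thesis unfolding memE by (intro exI[of _ "\<lambda>i. if i = j then 1 else 0"]) simp
  qed
  have dimE: "dim E = d"
  proof (rule dim_unique)
    show "e ` {..<d} \<subseteq> E" using einE by auto
    show "E \<subseteq> span (e ` {..<d})"
    proof
      fix y assume "y \<in> E"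
      then obtain t where "y = (\<Sum>i<d. t i *\<^sub>R e i)" unfolding memE by blast
      moreover have "t i *\<^sub>R e i \<in> span (e ` {..<d})" if "i \<in> {..<d}" for i
        by (rule span_scale, rule span_base) (use that in auto)
      ultimately show "y \<in> span (e ` {..<d})"
        by (metis (no_types, lifting) span_sum)
    qed
    show "independent (e ` {..<d})"
      by (rule independent_mono[OF independent_Basis]) (auto simp: e_def)
    have "inj_on e {..<d}" unfolding inj_on_def e_def using hinj by (auto simp: axis_eq_axis)
    then show "card (e ` {..<d}) = d" by (simp add: card_image)
  qed
  have dpl: "d_plane d E"
    unfolding d_plane_def using sub dimE by (simp add: subspace_imp_affine aff_dim_subspace)
  obtain c where c: "\<forall>x. x \<notin> E \<longrightarrow> D_plane K d \<alpha> E x = c * infdist x E"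
    using de dpl unfolding distance_exact_def by blast
  define H where "H = Hf Kt (real d + \<alpha>)"
  define \<gamma> where "\<gamma> = (real d + \<alpha>) / 2"
  have gd: "\<gamma> > real d / 2" using a by (simp add: \<gamma>_def field_simps)
  have cH: "cls \<gamma> H" unfolding H_def \<gamma>_def by (rule cls_Hf[OF cont B])
  have main: "\<bar>(T1 ^^ d) H (r\<^sup>2)\<bar> powr (-1/\<alpha>) = c * r" if r: "r > 0" for r
  proof -
    define x where "x = r *\<^sub>R e d"
    have orth: "x \<bullet> y = 0" if "y \<in> E" for y
    proof -
      obtain t where "y = (\<Sum>i<d. t i *\<^sub>R e i)" using \<open>y \<in> E\<close> unfolding memE by blast
      then show ?thesis using ee by (simp add: x_def inner_sum_right)
    qed
    have ne1: "norm (e d) = 1" using ee[of d d] by (simp add: norm_eq_sqrt_inner)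
    have nx: "norm x = r" using r ne1 by (simp add: x_def)
    have xE: "x \<notin> E"
    proof
      assume "x \<in> E"
      then have "x \<bullet> x = 0" by (rule orth)
      then show False using nx r by simp
    qed
    have dist_eq: "(dist x y)\<^sup>2 = r\<^sup>2 + (norm y)\<^sup>2" if "y \<in> E" for y
    proof -
      have "(dist x y)\<^sup>2 = (x - y) \<bullet> (x - y)" by (simp add: dist_norm power2_norm_eq_inner)
      also have "\<dots> = x \<bullet> x + y \<bullet> y - 2 * (x \<bullet> y)" by (simp add: inner_diff algebra_simps inner_commute)
      also have "\<dots> = r\<^sup>2 + (norm y)\<^sup>2" using orth[OF that] nx by (simp add: power2_norm_eq_inner[symmetric])
      finally show ?thesis .
    qed
    have inf: "infdist x E = r"
    proof (rule antisym)
      have "0 \<in> E" using sub by (simp add: subspace_0)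
      then show "infdist x E \<le> r" using infdist_le[of 0 E x] nx by (simp add: dist_norm)
      have ne: "E \<noteq> {}" using \<open>0 \<in> E\<close> by auto
      show "r \<le> infdist x E" unfolding infdist_notempty[OF ne]
      proof (rule cINF_greatest[OF ne])
        fix y assume "y \<in> E"
        then have "r\<^sup>2 \<le> (dist x y)\<^sup>2" using dist_eq by simp
        then show "r \<le> dist x y" using r by (simp add: power2_le_iff_abs_le)
      qed
    qed
    define F where "F = (\<lambda>y. K (x - y) * norm (x - y) powr (- (real d + \<alpha>)))"
    have anyframe: "(\<integral>t. F (a' + (\<Sum>i<d. t i *\<^sub>R v i)) \<partial>PiM {..<d} (\<lambda>_. lborel)) = (T1 ^^ d) H (r\<^sup>2)"
      if fr: "plane_frame d E a' v" for a' v
    proof -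
      have on: "\<forall>i<d. \<forall>j<d. v i \<bullet> v j = (if i = j then 1 else 0)"
        using fr unfolding plane_frame_def by blast
      have "0 \<in> E" using sub by (simp add: subspace_0)
      then obtain c0 where c0: "0 = a' + (\<Sum>i<d. c0 i *\<^sub>R v i)"
        using fr unfolding plane_frame_def by auto
      have y_eq: "a' + (\<Sum>i<d. t i *\<^sub>R v i) = (\<Sum>i<d. (t i - c0 i) *\<^sub>R v i)" for t
      proof -
        have "a' + (\<Sum>i<d. t i *\<^sub>R v i) = (a' + (\<Sum>i<d. t i *\<^sub>R v i)) - (a' + (\<Sum>i<d. c0 i *\<^sub>R v i))"
          using c0 by simp
        also have "\<dots> = (\<Sum>i<d. (t i - c0 i) *\<^sub>R v i)"
          by (simp add: scaleR_diff_left sum_subtractf)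
        finally show ?thesis .
      qed
      have nd: "(norm (x - (a' + (\<Sum>i<d. t i *\<^sub>R v i))))\<^sup>2 = r\<^sup>2 + SS d c0 t" for t
      proof -
        have yE: "a' + (\<Sum>i<d. t i *\<^sub>R v i) \<in> E" by (rule frame_sum_in[OF fr])
        have "(norm (x - (a' + (\<Sum>i<d. t i *\<^sub>R v i))))\<^sup>2 = r\<^sup>2 + (norm (a' + (\<Sum>i<d. t i *\<^sub>R v i)))\<^sup>2"
          using dist_eq[OF yE] by (simp add: dist_norm)
        also have "(norm (a' + (\<Sum>i<d. t i *\<^sub>R v i)))\<^sup>2 = SS d c0 t"
          unfolding y_eq SS_def by (rule norm_sum_orth[OF on])
        finally show ?thesis .
      qed
      have Feq: "F (a' + (\<Sum>i<d. t i *\<^sub>R v i)) = H (r\<^sup>2 + SS d c0 t)" for t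
      proof -
        define z where "z = x - (a' + (\<Sum>i<d. t i *\<^sub>R v i))"
        have nz: "(norm z)\<^sup>2 = r\<^sup>2 + SS d c0 t" unfolding z_def by (rule nd)
        have pos: "r\<^sup>2 + SS d c0 t > 0" using r SS_nonneg[of d c0 t] by (simp add: add_pos_nonneg)
        have sq: "sqrt (r\<^sup>2 + SS d c0 t) = norm z" using nz by (metis norm_ge_zero real_sqrt_unique)
        show ?thesis unfolding F_def z_def[symmetric] H_def Hf_def using pos sq KK by simp
      qed
      have "(\<integral>t. F (a' + (\<Sum>i<d. t i *\<^sub>R v i)) \<partial>PiM {..<d} (\<lambda>_. lborel)) = (\<integral>t. H (r\<^sup>2 + SS d c0 t) \<partial>PM d)"
        by (simp add: Feq)
      also have "\<dots> = (T1 ^^ d) H (r\<^sup>2)"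
        using r by (intro PM_integral[OF cH gd]) simp
      finally show ?thesis .
    qed
    have "plane_hausdorff_integral d E F = (T1 ^^ d) H (r\<^sup>2)"
    proof -
      let ?P = "\<lambda>I. \<exists>a' v. plane_frame d E a' v \<and> I = (\<integral>t. F (a' + (\<Sum>i<d. t i *\<^sub>R v i)) \<partial>PiM {..<d} (\<lambda>_. lborel))"
      have "\<exists>I. ?P I" using frame0 by blast
      then have "?P (SOME I. ?P I)" by (rule someI_ex)
      then obtain a' v where fr: "plane_frame d E a' v"
        and eq: "(SOME I. ?P I) = (\<integral>t. F (a' + (\<Sum>i<d. t i *\<^sub>R v i)) \<partial>PiM {..<d} (\<lambda>_. lborel))" by blast
      show ?thesis unfolding plane_hausdorff_integral_def eq anyframe[OF fr] ..
    qed
    then have "D_plane K d \<alpha> E x = ((T1 ^^ d) H (r\<^sup>2)) powr (-1/\<alpha>)"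
      unfolding D_plane_def F_def by simp
    then have "\<bar>(T1 ^^ d) H (r\<^sup>2)\<bar> powr (-1/\<alpha>) = D_plane K d \<alpha> E x"
      by (simp add: powr_abs_real[symmetric])
    also have "\<dots> = c * r" using c xE inf by simp
    finally show ?thesis .
  qed
  show ?thesis
  proof (intro exI allI impI)
    fix \<rho> :: real assume "\<rho> > 0"
    then show "\<bar>(T1 ^^ d) (Hf Kt (real d + \<alpha>)) \<rho>\<bar> powr (-1/\<alpha>) = c * sqrt \<rho>"
      using main[of "sqrt \<rho>"] by (simp add: H_def)
  qed
qed

theorem theorem2p5:
  fixes K :: "real ^ 'n \<Rightarrow> real" and d :: nat and \<alpha> :: real
  assumes "1 \<le> d" and "d < CARD('n)" and "\<alpha> > 0"
    and "continuous_on (UNIV - {0}) K"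
    and "bounded (K ` (UNIV - {0}))"
    and "distance_exact K d \<alpha>"
    and "\<exists>Kt :: real \<Rightarrow> real. continuous_on {0<..} Kt \<and> bounded (Kt ` {0<..}) \<and>
           (\<forall>x. K x = Kt (norm x))"
  shows "\<exists>c. \<forall>x. x \<noteq> 0 \<longrightarrow> K x = c"
proof -
  obtain Kt :: "real \<Rightarrow> real" where cont: "continuous_on {0<..} Kt"
    and bd: "bounded (Kt ` {0<..})" and KK: "\<forall>x. K x = Kt (norm x)"
    using assms(7) by blast
  obtain B0 where B: "\<forall>r>0. \<bar>Kt r\<bar> \<le> B0"
    using bd unfolding bounded_real by auto
  obtain c where EX: "\<forall>\<rho>>0. \<bar>(T1 ^^ d) (Hf Kt (real d + \<alpha>)) \<rho>\<bar> powr (-1/\<alpha>) = c * sqrt \<rho>"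
    using geo[OF assms(2) assms(3) assms(6) KK cont B] by blast
  obtain l where l: "\<forall>r>0. Kt r = l"
    using main_analytic[OF assms(3) cont B EX] by blast
  show ?thesis
  proof (intro exI allI impI)
    fix x :: "real ^ 'n" assume "x \<noteq> 0"
    then have "norm x > 0" by simp
    then show "K x = l" using KK l by simp
  qed
qed

end
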